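(* Let $z\in\mathbb D$, $0<R<1$, $0<L<1$, and suppose $\{z_1,\dots,z_k\}$ is an $L$-chain with respect to $\rho$ of the pseudohyperbolic disk $D(z,R)$. Then $$\frac{R^2}{1-R^2}\cdot\frac{1-L^2}{L^2}\le k\le\frac{(2R+L)^2}{1-R^2}\cdot\frac1{L^2}.$$
   Context: $\mathbb D$ open unit disk, $\rho(z,w)=|z-w|/|1-\bar wz|$, $D(z,R)=\{w\in\mathbb D:\rho(w,z)<R\}$. An $L$-chain of a subset $S$ w.r.t. $\rho$ is a maximal subset of $S$ whose distinct points are at $\rho$-distance $\ge L$. *)

theory Defs
  imports "HOL-Analysis.Analysis"
begin

definition unit_disk :: "complex set" where
  "unit_disk = {z. cmod z < 1}"

definition pseudo_hyp :: "complex \<Rightarrow> complex \<Rightarrow> real" where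
  "pseudo_hyp z w = cmod (z - w) / cmod (1 - cnj w * z)"

definition ph_disk :: "complex \<Rightarrow> real \<Rightarrow> complex set" where
  "ph_disk z R = {w \<in> unit_disk. pseudo_hyp w z < R}"

definition separated :: "real \<Rightarrow> complex set \<Rightarrow> complex set \<Rightarrow> bool" where
  "separated L S C \<longleftrightarrow> C \<subseteq> S \<and>
     (\<forall>a\<in>C. \<forall>b\<in>C. a \<noteq> b \<longrightarrow> pseudo_hyp a b \<ge> L)"

definition L_chain :: "real \<Rightarrow> complex set \<Rightarrow> complex set \<Rightarrow> bool" where
  "L_chain L S C \<longleftrightarrow> separated L S C \<and>
     (\<forall>C'. separated L S C' \<and> C \<subseteq> C' \<longrightarrow> C' = C)"

end

theory Submission
  imports Defs
begin

definition mob :: "complex \<Rightarrow> complex \<Rightarrow> complex" where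
  "mob a w = (a - w) / (1 - cnj a * w)"

lemma denom_nz:
  assumes "cmod a < 1" "cmod w < 1" shows "1 - cnj a * w \<noteq> 0"
proof
  assume "1 - cnj a * w = 0"
  hence "cnj a * w = 1" by simp
  hence "cmod (cnj a * w) = 1" by simp
  moreover have "cmod (cnj a * w) < 1" using assms
    by (simp add: norm_mult) (metis mult_strict_mono' norm_ge_zero mult_1)
  ultimately show False by simp
qed

lemma key_id: "(cmod (1 - cnj a * w))^2 - (cmod (a - w))^2 = (1 - (cmod a)^2) * (1 - (cmod w)^2)"
  by (simp only: cmod_power2) (simp add: algebra_simps power2_eq_square)

lemma ph_sym: "pseudo_hyp x y = pseudo_hyp y x"
proof -
  have "cmod (1 - cnj y * x) = cmod (cnj (1 - cnj y * x))" by (rule complex_mod_cnj[symmetric])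
  also have "\<dots> = cmod (1 - cnj x * y)" by (simp add: mult.commute)
  finally show ?thesis unfolding pseudo_hyp_def by (simp add: norm_minus_commute)
qed

lemma ph_mob: "pseudo_hyp w a = cmod (mob a w)"
  unfolding pseudo_hyp_def mob_def by (simp add: norm_divide norm_minus_commute)

lemma mob_sq:
  assumes "cmod a < 1" "cmod w < 1"
  shows "1 - (cmod (mob a w))^2 = (1 - (cmod a)^2) * (1 - (cmod w)^2) / (cmod (1 - cnj a * w))^2"
proof -
  have d: "cmod (1 - cnj a * w) > 0" using denom_nz[OF assms] by simp
  have "(cmod (mob a w))^2 = (cmod (a - w))^2 / (cmod (1 - cnj a * w))^2"
    unfolding mob_def by (simp add: norm_divide power_divide)
  thus ?thesis using d key_id[of a w] by (simp add: field_simps)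
qed

lemma mob_in:
  assumes "cmod a < 1" "cmod w < 1"
  shows "cmod (mob a w) < 1"
proof -
  have d: "cmod (1 - cnj a * w) > 0" using denom_nz[OF assms] by simp
  have "(1 - (cmod a)^2) * (1 - (cmod w)^2) > 0" using assms
    by (simp add: abs_square_less_1)
  hence "1 - (cmod (mob a w))^2 > 0" using mob_sq[OF assms] d by simp
  thus ?thesis by (simp add: abs_square_less_1)
qed

lemma mob_mul:
  assumes "1 - cnj a * w \<noteq> 0" shows "mob a w * (1 - cnj a * w) = a - w"
  using assms unfolding mob_def by simp

lemma mob_mob:
  assumes "cmod a < 1" "cmod w < 1"
  shows "mob a (mob a w) = w"
proof -
  have d: "1 - cnj a * w \<noteq> 0" using denom_nz[OF assms] .
  have e: "1 - cnj a * a \<noteq> 0" using denom_nz[OF assms(1) assms(1)] .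
  have u: "mob a w * (1 - cnj a * w) = a - w" using mob_mul[OF d] .
  have n: "(a - mob a w) * (1 - cnj a * w) = w * (1 - cnj a * a)"
  proof -
    have "(a - mob a w) * (1 - cnj a * w) = a * (1 - cnj a * w) - mob a w * (1 - cnj a * w)"
      by (rule left_diff_distrib)
    also have "\<dots> = a * (1 - cnj a * w) - (a - w)" by (simp only: u)
    also have "\<dots> = w * (1 - cnj a * a)" by (simp add: algebra_simps)
    finally show ?thesis .
  qed
  have m: "(1 - cnj a * mob a w) * (1 - cnj a * w) = (1 - cnj a * a)"
  proof -
    have "(1 - cnj a * mob a w) * (1 - cnj a * w) = (1 - cnj a * w) - cnj a * (mob a w * (1 - cnj a * w))"
      by (simp add: algebra_simps)
    also have "\<dots> = (1 - cnj a * w) - cnj a * (a - w)" by (simp only: u)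
    also have "\<dots> = 1 - cnj a * a" by (simp add: algebra_simps)
    finally show ?thesis .
  qed
  have "mob a (mob a w) = (a - mob a w)/(1 - cnj a * mob a w)" by (rule mob_def)
  also have "\<dots> = ((a - mob a w) * (1 - cnj a * w)) / ((1 - cnj a * mob a w) * (1 - cnj a * w))"
    using d by simp
  also have "\<dots> = w" unfolding n m using e by simp
  finally show ?thesis .
qed

lemma frac_cancel:
  fixes K P A B :: real
  assumes "P > 0" "K > 0"
  shows "(K * A / P) / (K * B / P) = A / B"
  using assms by (cases "B = 0") (simp_all add: field_simps)

lemma mob_inv:
  assumes "cmod c < 1" "cmod x < 1" "cmod y < 1"
  shows "pseudo_hyp (mob c x) (mob c y) = pseudo_hyp x y"
proof -
  have dx: "1 - cnj c * x \<noteq> 0" using denom_nz assms by blast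
  have dy: "1 - cnj c * y \<noteq> 0" using denom_nz assms by blast
  have dyc: "cnj (1 - cnj c * y) \<noteq> 0" using dy by (metis complex_cnj_zero_iff)
  have ux: "mob c x * (1 - cnj c * x) = c - x" using mob_mul[OF dx] .
  have uy: "mob c y * (1 - cnj c * y) = c - y" using mob_mul[OF dy] .
  have uyc: "cnj (mob c y) * cnj (1 - cnj c * y) = cnj (c - y)" using arg_cong[OF uy, of cnj] by simp
  have E1: "(mob c x - mob c y) * ((1 - cnj c * x) * (1 - cnj c * y)) = (1 - cnj c * c) * (y - x)"
  proof -
    have "(mob c x - mob c y) * ((1 - cnj c * x) * (1 - cnj c * y))
       = (mob c x * (1 - cnj c * x)) * (1 - cnj c * y) - (mob c y * (1 - cnj c * y)) * (1 - cnj c * x)"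
      by (simp add: algebra_simps)
    also have "\<dots> = (c - x) * (1 - cnj c * y) - (c - y) * (1 - cnj c * x)" by (simp only: ux uy)
    also have "\<dots> = (1 - cnj c * c) * (y - x)" by (simp add: algebra_simps)
    finally show ?thesis .
  qed
  have E2: "(1 - cnj (mob c y) * mob c x) * (cnj (1 - cnj c * y) * (1 - cnj c * x)) = (1 - cnj c * c) * (1 - cnj y * x)"
  proof -
    have "(1 - cnj (mob c y) * mob c x) * (cnj (1 - cnj c * y) * (1 - cnj c * x))
       = cnj (1 - cnj c * y) * (1 - cnj c * x) - (cnj (mob c y) * cnj (1 - cnj c * y)) * (mob c x * (1 - cnj c * x))"
      by (simp add: algebra_simps)
    also have "\<dots> = cnj (1 - cnj c * y) * (1 - cnj c * x) - cnj (c - y) * (c - x)" by (simp only: ux uyc)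
    also have "\<dots> = (1 - cnj c * c) * (1 - cnj y * x)" by (simp add: algebra_simps)
    finally show ?thesis .
  qed
  have m: "cmod (cnj (1 - cnj c * y)) = cmod (1 - cnj c * y)" by (rule complex_mod_cnj)
  have c0: "1 - cnj c * c \<noteq> 0" using denom_nz[OF assms(1) assms(1)] .
  have N1: "cmod (mob c x - mob c y) * (cmod (1 - cnj c * x) * cmod (1 - cnj c * y)) = cmod (1 - cnj c * c) * cmod (y - x)"
    using arg_cong[OF E1, of cmod] by (simp add: norm_mult)
  have N2: "cmod (1 - cnj (mob c y) * mob c x) * (cmod (1 - cnj c * y) * cmod (1 - cnj c * x)) = cmod (1 - cnj c * c) * cmod (1 - cnj y * x)"
    using arg_cong[OF E2, of cmod] m by (simp add: norm_mult)
  have p: "cmod (1 - cnj c * x) * cmod (1 - cnj c * y) > 0" using dx dy by simp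
  have q: "cmod (1 - cnj c * c) > 0" using c0 by simp
  have X: "cmod (mob c x - mob c y) = cmod (1 - cnj c * c) * cmod (x - y) / (cmod (1 - cnj c * x) * cmod (1 - cnj c * y))"
    using N1 p by (intro eq_divide_imp) (auto simp: norm_minus_commute)
  have Y: "cmod (1 - cnj (mob c y) * mob c x) = cmod (1 - cnj c * c) * cmod (1 - cnj y * x) / (cmod (1 - cnj c * x) * cmod (1 - cnj c * y))"
    using N2 p by (intro eq_divide_imp) (auto simp: mult.commute)
  show ?thesis unfolding pseudo_hyp_def X Y using p q by (rule frac_cancel)
qed

lemma frac_le_crossI:
  fixes A B C D :: real
  shows "0 < B \<Longrightarrow> 0 < D \<Longrightarrow> A * D \<le> C * B \<Longrightarrow> A / B \<le> C / D"
  by (simp add: divide_simps)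

lemma ph_bounds:
  assumes "cmod x < 1" "cmod y < 1"
  shows "pseudo_hyp x y \<le> (cmod x + cmod y) / (1 + cmod x * cmod y)"
    and "(cmod x - cmod y) / (1 - cmod x * cmod y) \<le> pseudo_hyp x y"
proof -
  define a where "a = cmod x"
  define b where "b = cmod y"
  define D where "D = cmod (1 - cnj y * x)"
  define N where "N = cmod (x - y)"
  have a0: "0 \<le> a" "a < 1" using assms a_def by auto
  have b0: "0 \<le> b" "b < 1" using assms b_def by auto
  have ab: "a * b < 1" using a0 b0 by (metis mult_strict_mono' mult_1 less_le_not_le)
  have ab0: "0 \<le> a * b" using a0 b0 by simp
  have Dn: "D\<^sup>2 - N\<^sup>2 = (1 - b\<^sup>2) * (1 - a\<^sup>2)"
    using key_id[of y x] unfolding D_def N_def a_def b_def by (simp add: norm_minus_commute)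
  have Dup: "D \<le> 1 + a * b"
  proof -
    have "D \<le> cmod 1 + cmod (cnj y * x)" unfolding D_def by (rule norm_triangle_ineq4)
    thus ?thesis by (simp add: a_def b_def norm_mult mult.commute)
  qed
  have Dlo: "1 - a * b \<le> D"
  proof -
    have "cmod 1 - cmod (cnj y * x) \<le> D" unfolding D_def by (rule norm_triangle_ineq2[of 1, simplified])
    thus ?thesis by (simp add: a_def b_def norm_mult mult.commute)
  qed
  have Dpos: "D > 0" using Dlo ab by linarith
  have N0: "N \<ge> 0" unfolding N_def by simp
  have P0: "(1 - b\<^sup>2) * (1 - a\<^sup>2) \<ge> 0" using a0 b0 by (simp add: abs_square_le_1)
  have ph: "pseudo_hyp x y = N / D" unfolding pseudo_hyp_def N_def D_def ..
  have "N * (1 + a * b) \<le> (a + b) * D"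
  proof -
    have "(N * (1 + a * b))\<^sup>2 \<le> ((a + b) * D)\<^sup>2"
    proof -
      have "(N * (1 + a * b))\<^sup>2 = (D\<^sup>2 - (1 - b\<^sup>2) * (1 - a\<^sup>2)) * (1 + a * b)\<^sup>2"
        using Dn by (simp add: power_mult_distrib)
      also have "\<dots> = D\<^sup>2 * (1 + a * b)\<^sup>2 - (1 - b\<^sup>2) * (1 - a\<^sup>2) * (1 + a * b)\<^sup>2"
        by (simp add: algebra_simps)
      also have "\<dots> \<le> D\<^sup>2 * (1 + a * b)\<^sup>2 - (1 - b\<^sup>2) * (1 - a\<^sup>2) * D\<^sup>2"
      proof -
        have "D\<^sup>2 \<le> (1 + a * b)\<^sup>2" using Dup Dpos by (intro power_mono) auto
        hence "(1 - b\<^sup>2) * (1 - a\<^sup>2) * D\<^sup>2 \<le> (1 - b\<^sup>2) * (1 - a\<^sup>2) * (1 + a * b)\<^sup>2"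
          using P0 by (rule mult_left_mono)
        thus ?thesis by linarith
      qed
      also have "\<dots> = ((a + b) * D)\<^sup>2" by (simp add: algebra_simps power2_eq_square)
      finally show ?thesis .
    qed
    thus ?thesis by (rule power2_le_imp_le) (use a0 b0 Dpos in simp)
  qed
  thus "pseudo_hyp x y \<le> (cmod x + cmod y) / (1 + cmod x * cmod y)"
    unfolding ph a_def[symmetric] b_def[symmetric] using Dpos ab0
    by (intro frac_le_crossI) (simp_all add: mult.commute)
  have "(a - b) * D \<le> N * (1 - a * b)"
  proof (cases "a \<le> b")
    case True
    have "(a - b) * D \<le> 0" using True Dpos by (simp add: mult_nonpos_nonneg)
    also have "0 \<le> N * (1 - a * b)" using N0 ab by simp
    finally show ?thesis .
  next
    case False
    have "((a - b) * D)\<^sup>2 \<le> (N * (1 - a * b))\<^sup>2"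
    proof -
      have "((a - b) * D)\<^sup>2 = D\<^sup>2 * (1 - a * b)\<^sup>2 - (1 - b\<^sup>2) * (1 - a\<^sup>2) * D\<^sup>2"
        by (simp add: algebra_simps power2_eq_square)
      also have "\<dots> \<le> D\<^sup>2 * (1 - a * b)\<^sup>2 - (1 - b\<^sup>2) * (1 - a\<^sup>2) * (1 - a * b)\<^sup>2"
      proof -
        have "(1 - a * b)\<^sup>2 \<le> D\<^sup>2" using Dlo ab by (intro power_mono) auto
        hence "(1 - b\<^sup>2) * (1 - a\<^sup>2) * (1 - a * b)\<^sup>2 \<le> (1 - b\<^sup>2) * (1 - a\<^sup>2) * D\<^sup>2"
          using P0 by (rule mult_left_mono)
        thus ?thesis by linarith
      qed
      also have "\<dots> = (D\<^sup>2 - (1 - b\<^sup>2) * (1 - a\<^sup>2)) * (1 - a * b)\<^sup>2"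
        by (simp add: algebra_simps)
      also have "\<dots> = (N * (1 - a * b))\<^sup>2" using Dn by (simp add: power_mult_distrib)
      finally show ?thesis .
    qed
    thus ?thesis by (rule power2_le_imp_le) (use N0 ab in simp)
  qed
  thus "(cmod x - cmod y) / (1 - cmod x * cmod y) \<le> pseudo_hyp x y"
    unfolding ph a_def[symmetric] b_def[symmetric] using Dpos ab
    by (intro frac_le_crossI) (simp_all add: mult.commute)
qed


lemma frac_le_sum:
  fixes p q :: real
  assumes "0 \<le> p" "0 \<le> q" shows "(p + q) / (1 + p * q) \<le> p + q"
proof -
  have "0 \<le> (p + q) * (p * q)" using assms by simp
  hence "(p + q) * 1 \<le> (p + q) * (1 + p * q)" by (simp add: algebra_simps)
  moreover have "0 < 1 + p * q" using assms by (simp add: add_pos_nonneg)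
  ultimately have "(p + q) / (1 + p * q) \<le> (p + q) / 1" by (intro frac_le_crossI) auto
  thus ?thesis by simp
qed

lemma ph_tri:
  assumes "cmod x < 1" "cmod y < 1" "cmod w < 1"
  shows "pseudo_hyp x y \<le> pseudo_hyp x w + pseudo_hyp w y"
proof -
  have "pseudo_hyp x y = pseudo_hyp (mob w x) (mob w y)" using mob_inv assms by simp
  also have "\<dots> \<le> (cmod (mob w x) + cmod (mob w y)) / (1 + cmod (mob w x) * cmod (mob w y))"
    using mob_in assms by (intro ph_bounds) auto
  also have "\<dots> \<le> cmod (mob w x) + cmod (mob w y)"
    by (rule frac_le_sum) simp_all
  also have "\<dots> = pseudo_hyp x w + pseudo_hyp w y"
    unfolding ph_mob[of x w] ph_sym[of w y] ph_mob[of y w] ..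
  finally show ?thesis .
qed

lemma ph_contain:
  assumes z: "cmod z < 1" and c: "cmod c < 1" and w: "cmod w < 1"
    and cz: "pseudo_hyp c z < R" and wc: "pseudo_hyp w c < t"
    and t: "0 < t" "t < 1" and R: "R < 1"
  shows "pseudo_hyp w z < (R + t) / (1 + R * t)"
proof -
  define a where "a = cmod (mob z w)"
  define b where "b = cmod (mob z c)"
  have a0: "0 \<le> a" "a < 1" using mob_in z w a_def by auto
  have b0: "0 \<le> b" "b < R" using cz b_def ph_mob by auto
  have ab: "a * b < 1" using a0 b0 R by (metis mult_strict_mono' mult_1 less_le_not_le less_trans)
  have "(a - b) / (1 - a * b) \<le> pseudo_hyp (mob z w) (mob z c)"
    unfolding a_def b_def using mob_in z w c by (intro ph_bounds) auto
  also have "\<dots> = pseudo_hyp w c" using mob_inv z w c by simp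
  finally have "(a - b) / (1 - a * b) < t" using wc by simp
  hence "a - b < t * (1 - a * b)" using ab by (simp add: divide_less_eq)
  hence 1: "a * (1 + b * t) < b + t" by (simp add: algebra_simps)
  have 2: "(b + t) * (1 + R * t) \<le> (R + t) * (1 + b * t)"
  proof -
    have "b * (1 - t * t) \<le> R * (1 - t * t)" using b0 t by (intro mult_right_mono) (auto simp: mult_le_one)
    thus ?thesis by (simp add: algebra_simps)
  qed
  have p1: "1 + b * t > 0" using b0 t by (simp add: add_pos_nonneg)
  have p2: "1 + R * t > 0" using b0 t by (simp add: add_pos_nonneg)
  have "a < (b + t) / (1 + b * t)" using 1 p1 by (simp add: less_divide_eq)
  also have "\<dots> \<le> (R + t) / (1 + R * t)" using 2 p1 p2 by (intro frac_le_crossI) auto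
  finally show ?thesis using a_def ph_mob by simp
qed

lemma mob_image:
  assumes a: "cmod a < 1" and r: "r \<le> 1"
  shows "mob a ` ball 0 r = ph_disk a r"
proof (intro equalityI subsetI)
  fix v assume "v \<in> mob a ` ball 0 r"
  then obtain u where u: "u \<in> ball 0 r" "v = mob a u" by auto
  have u1: "cmod u < 1" using u r by auto
  have "cmod v < 1" using u mob_in[OF a u1] by simp
  moreover have "pseudo_hyp v a < r" using u mob_mob[OF a u1] by (simp add: ph_mob)
  ultimately show "v \<in> ph_disk a r" by (simp add: ph_disk_def unit_disk_def)
next
  fix v assume "v \<in> ph_disk a r"
  hence v: "cmod v < 1" "cmod (mob a v) < r" by (auto simp: ph_disk_def unit_disk_def ph_mob)
  hence "mob a v \<in> ball 0 r" by simp
  moreover have "v = mob a (mob a v)" using mob_mob[OF a v(1)] by simp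
  ultimately show "v \<in> mob a ` ball 0 r" by blast
qed

definition T :: "complex \<Rightarrow> real^2" where "T z = vector [Re z, Im z]"
definition Ti :: "real^2 \<Rightarrow> complex" where "Ti x = Complex (x$1) (x$2)"

lemma Ti_T [simp]: "Ti (T z) = z" by (simp add: T_def Ti_def complex_eq_iff)
lemma T_Ti [simp]: "T (Ti x) = x" by (simp add: T_def Ti_def vec_eq_iff forall_2)

lemma norm_T [simp]: "norm (T z) = cmod z"
proof -
  have "(norm (T z))^2 = (cmod z)^2"
    by (simp only: power2_norm_eq_inner cmod_power2) (simp add: inner_vec_def sum_2 T_def power2_eq_square inner_complex_def)
  thus ?thesis by (simp add: power2_eq_iff_nonneg)
qed

lemma norm_Ti: "cmod (Ti x) = norm x" by (metis norm_T T_Ti)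

lemma linear_T: "linear T"
  by (rule linearI) (simp_all add: T_def vec_eq_iff forall_2)
lemma linear_Ti: "linear Ti"
  by (rule linearI) (simp_all add: Ti_def complex_eq_iff)

lemma bl_T: "bounded_linear T" using linear_T linear_conv_bounded_linear by blast
lemma bl_Ti: "bounded_linear Ti" using linear_Ti linear_conv_bounded_linear by blast

lemma T_image: "T ` A = Ti -` A"
  by (auto simp: image_iff) (metis T_Ti)

lemma T_ball: "T ` ball 0 r = ball 0 r"
  unfolding T_image by (auto simp: norm_Ti)

lemma Ti_ball: "Ti ` ball 0 r = ball 0 r"
  by (auto simp: image_iff norm_Ti) (metis Ti_T norm_T mem_ball_0)

lemma bridge:
  fixes F :: "real^2 \<Rightarrow> real"
  assumes "\<And>x. x \<in> X \<Longrightarrow> 0 \<le> F x"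
  shows "(F has_integral V) X \<longleftrightarrow>
    ((\<lambda>y. vec (F y) :: real^1) absolutely_integrable_on X \<and> integral X (\<lambda>y. vec (F y) :: real^1) = vec V)"
proof
  assume H: "(F has_integral V) X"
  hence "F absolutely_integrable_on X"
    using assms by (intro nonnegative_absolutely_integrable_1) (auto simp: has_integral_integrable)
  hence "(\<lambda>y. vec (F y) :: real^1) absolutely_integrable_on X"
    by (simp add: absolutely_integrable_on_1_iff)
  moreover have "integral X (\<lambda>y. vec (F y) :: real^1) = vec V"
    using H by (simp add: integral_on_1_eq integral_unique)
  ultimately show "(\<lambda>y. vec (F y) :: real^1) absolutely_integrable_on X \<and> integral X (\<lambda>y. vec (F y) :: real^1) = vec V" ..
next
  assume H: "(\<lambda>y. vec (F y) :: real^1) absolutely_integrable_on X \<and> integral X (\<lambda>y. vec (F y) :: real^1) = vec V"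
  hence "F absolutely_integrable_on X" by (simp add: absolutely_integrable_on_1_iff)
  hence I: "F integrable_on X" using set_lebesgue_integral_eq_integral(1) by blast
  have "vec (integral X F) = (vec V :: real^1)" using H by (simp add: integral_on_1_eq)
  hence "integral X F = V" by (metis vec_component)
  thus "(F has_integral V) X" using I by (metis has_integral_integral)
qed


lemma cv:
  fixes g :: "real^2 \<Rightarrow> real^2" and f h :: "real^2 \<Rightarrow> real"
  assumes S: "S \<in> sets lebesgue"
    and der: "\<And>x. x \<in> S \<Longrightarrow> (g has_derivative g' x) (at x within S)"
    and inj: "inj_on g S"
    and J: "\<And>x. x \<in> S \<Longrightarrow> \<bar>det (matrix (g' x))\<bar> * f (g x) = h x"
    and h0: "\<And>x. x \<in> S \<Longrightarrow> 0 \<le> h x"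
    and f0: "\<And>y. y \<in> g ` S \<Longrightarrow> 0 \<le> f y"
  shows "(h has_integral V) S \<longleftrightarrow> (f has_integral V) (g ` S)"
proof -
  have eq: "\<And>x. x \<in> S \<Longrightarrow> \<bar>det (matrix (g' x))\<bar> *\<^sub>R (vec (f (g x)) :: real^1) = vec (h x)"
    using J by (simp add: vec_eq_iff)
  have "(h has_integral V) S \<longleftrightarrow>
    ((\<lambda>y. vec (h y) :: real^1) absolutely_integrable_on S \<and> integral S (\<lambda>y. vec (h y) :: real^1) = vec V)"
    using h0 by (rule bridge)
  also have "\<dots> \<longleftrightarrow> ((\<lambda>x. \<bar>det (matrix (g' x))\<bar> *\<^sub>R (vec (f (g x)) :: real^1)) absolutely_integrable_on S \<and>
      integral S (\<lambda>x. \<bar>det (matrix (g' x))\<bar> *\<^sub>R (vec (f (g x)) :: real^1)) = vec V)"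
  proof -
    have "(\<lambda>y. vec (h y) :: real^1) absolutely_integrable_on S \<longleftrightarrow>
       (\<lambda>x. \<bar>det (matrix (g' x))\<bar> *\<^sub>R (vec (f (g x)) :: real^1)) absolutely_integrable_on S"
      by (rule absolutely_integrable_spike_eq[of "{}"]) (use eq in auto)
    moreover have "integral S (\<lambda>y. vec (h y) :: real^1) = integral S (\<lambda>x. \<bar>det (matrix (g' x))\<bar> *\<^sub>R (vec (f (g x)) :: real^1))"
      by (rule integral_cong) (use eq in auto)
    ultimately show ?thesis by simp
  qed
  also have "\<dots> \<longleftrightarrow> ((\<lambda>y. vec (f y) :: real^1) absolutely_integrable_on (g ` S) \<and>
      integral (g ` S) (\<lambda>y. vec (f y) :: real^1) = vec V)"
    by (rule has_absolute_integral_change_of_variables[OF S der inj])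
  also have "\<dots> \<longleftrightarrow> (f has_integral V) (g ` S)"
    using f0 by (rule bridge[symmetric])
  finally show ?thesis .
qed


definition rad :: "real^2 \<Rightarrow> real^2" where
  "rad y = (1 / sqrt (1 - y \<bullet> y)) *\<^sub>R y"

lemma rad_der:
  assumes "norm y < 1"
  shows "(rad has_derivative (\<lambda>v. (1 / sqrt (1 - y \<bullet> y)) *\<^sub>R v + ((y \<bullet> v) / (sqrt (1 - y \<bullet> y))^3) *\<^sub>R y)) (at y)"
proof -
  have p: "0 < 1 - y \<bullet> y" using assms by (simp add: dot_square_norm abs_square_less_1)
  define s where "s = sqrt (1 - y \<bullet> y)"
  have s0: "s > 0" using p s_def by simp
  have d0: "((\<lambda>y. y \<bullet> y) has_derivative (\<lambda>v. y \<bullet> v + v \<bullet> y)) (at y)"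
    by (rule bounded_bilinear.FDERIV[OF bounded_bilinear_inner has_derivative_ident has_derivative_ident])
  have d1: "((\<lambda>y. 1 - y \<bullet> y) has_derivative (\<lambda>v. 0 - (y \<bullet> v + v \<bullet> y))) (at y)"
    by (rule has_derivative_diff[OF has_derivative_const d0])
  have d2: "((\<lambda>y. sqrt (1 - y \<bullet> y)) has_derivative (\<lambda>v. (0 - (y \<bullet> v + v \<bullet> y)) * (inverse (sqrt (1 - y \<bullet> y)) / 2))) (at y)"
    by (rule has_derivative_real_sqrt[OF p d1])
  have d3: "((\<lambda>y. inverse (sqrt (1 - y \<bullet> y))) has_derivative
      (\<lambda>v. - (inverse s * ((0 - (y \<bullet> v + v \<bullet> y)) * (inverse s / 2)) * inverse s))) (at y)"
    by (rule Deriv.has_derivative_inverse[OF _ d2, folded s_def]) (use s0 s_def in simp)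
  have d4: "((\<lambda>y. inverse (sqrt (1 - y \<bullet> y)) *\<^sub>R y) has_derivative
      (\<lambda>v. inverse s *\<^sub>R v + (- (inverse s * ((0 - (y \<bullet> v + v \<bullet> y)) * (inverse s / 2)) * inverse s)) *\<^sub>R y)) (at y)"
    by (rule has_derivative_scaleR[OF d3 has_derivative_ident, folded s_def])
  have eq: "(\<lambda>v. inverse s *\<^sub>R v + (- (inverse s * ((0 - (y \<bullet> v + v \<bullet> y)) * (inverse s / 2)) * inverse s)) *\<^sub>R y)
     = (\<lambda>v. (1 / s) *\<^sub>R v + ((y \<bullet> v) / s^3) *\<^sub>R y)"
  proof
    fix v
    have B: "- (inverse s * ((0 - (y \<bullet> v + v \<bullet> y)) * (inverse s / 2)) * inverse s) = (y \<bullet> v) / s^3"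
    proof -
      have "v \<bullet> y = y \<bullet> v" by (rule inner_commute)
      thus ?thesis using s0 by (simp add: field_simps power3_eq_cube)
    qed
    show "inverse s *\<^sub>R v + (- (inverse s * ((0 - (y \<bullet> v + v \<bullet> y)) * (inverse s / 2)) * inverse s)) *\<^sub>R y
       = (1 / s) *\<^sub>R v + ((y \<bullet> v) / s^3) *\<^sub>R y" unfolding B by (simp only: inverse_eq_divide)
  qed
  have rad_eq: "rad = (\<lambda>y. inverse (sqrt (1 - y \<bullet> y)) *\<^sub>R y)" unfolding rad_def inverse_eq_divide ..
  show ?thesis unfolding rad_eq s_def[symmetric] eq[symmetric] by (rule d4)
qed


definition wt :: "real^2 \<Rightarrow> real" where "wt x = 1 / (1 - (norm x)^2)^2"

lemma wt_nonneg: "0 \<le> wt x" by (simp add: wt_def)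

lemma inner2: fixes y :: "real^2" shows "y \<bullet> y = (y$1)^2 + (y$2)^2"
  by (simp add: inner_vec_def sum_2 power2_eq_square)

lemma rad_det:
  assumes "norm y < 1"
  shows "\<bar>det (matrix (\<lambda>v. (1 / sqrt (1 - y \<bullet> y)) *\<^sub>R v + ((y \<bullet> v) / (sqrt (1 - y \<bullet> y))^3) *\<^sub>R y))\<bar> = wt y"
proof -
  have p: "0 < 1 - y \<bullet> y" using assms by (simp add: dot_square_norm abs_square_less_1)
  define s where "s = sqrt (1 - y \<bullet> y)"
  have s0: "s > 0" using p s_def by simp
  have s2: "s^2 = 1 - (y$1)^2 - (y$2)^2" using p unfolding s_def by (simp add: inner2)
  have M: "matrix (\<lambda>v. (1 / s) *\<^sub>R v + ((y \<bullet> v) / s^3) *\<^sub>R y) $ i $ j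
      = (if i = j then 1 / s else 0) + (y $ j / s^3) * y $ i" for i j
    by (simp add: matrix_def inner_axis; simp add: axis_def)
  have "det (matrix (\<lambda>v. (1 / s) *\<^sub>R v + ((y \<bullet> v) / s^3) *\<^sub>R y))
      = (1/s + (y$1)^2 / s^3) * (1/s + (y$2)^2 / s^3) - ((y$2) * (y$1) / s^3) * ((y$1) * (y$2) / s^3)"
    unfolding det_2 M by (simp add: power2_eq_square)
  also have "\<dots> = (s^2 + (y$1)^2 + (y$2)^2) / s^4"
    using s0 by (simp add: field_simps power2_eq_square power3_eq_cube power4_eq_xxxx)
  also have "\<dots> = 1 / (s^2)^2"
  proof -
    have e: "(s^2)^2 = s^4" by (simp add: power4_eq_xxxx power2_eq_square)
    have "s^2 + (y$1)^2 + (y$2)^2 = 1" using s2 by simp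
    thus ?thesis unfolding e by simp
  qed
  also have "\<dots> = wt y" unfolding wt_def s_def using p by (simp add: power2_norm_eq_inner)
  finally show ?thesis unfolding s_def by (simp add: wt_def)
qed


lemma frac_lt_crossI:
  fixes A B C D :: real
  shows "0 < B \<Longrightarrow> 0 < D \<Longrightarrow> A * D < C * B \<Longrightarrow> A / B < C / D"
  by (simp add: divide_simps)

definition irad :: "real^2 \<Rightarrow> real^2" where
  "irad x = (1 / sqrt (1 + x \<bullet> x)) *\<^sub>R x"

lemma rad_inner: "y \<bullet> y < 1 \<Longrightarrow> rad y \<bullet> rad y = (y \<bullet> y) / (1 - y \<bullet> y)"
  by (simp add: rad_def power2_eq_square[symmetric] real_sqrt_pow2)

lemma irad_inner: "irad x \<bullet> irad x = (x \<bullet> x) / (1 + x \<bullet> x)"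
proof -
  have "0 \<le> x \<bullet> x" by simp
  hence "0 \<le> 1 + x \<bullet> x" by linarith
  thus ?thesis by (simp add: irad_def power2_eq_square[symmetric] real_sqrt_pow2)
qed

lemma irad_rad:
  assumes "norm y < 1" shows "irad (rad y) = y"
proof -
  have u: "y \<bullet> y < 1" using assms by (simp add: dot_square_norm abs_square_less_1)
  have u0: "0 \<le> y \<bullet> y" by simp
  have "1 + rad y \<bullet> rad y = 1 / (1 - y \<bullet> y)" using u by (simp add: rad_inner field_simps)
  hence "sqrt (1 + rad y \<bullet> rad y) = 1 / sqrt (1 - y \<bullet> y)" by (simp add: real_sqrt_divide)
  hence "(1 / sqrt (1 + rad y \<bullet> rad y)) * (1 / sqrt (1 - y \<bullet> y)) = 1" using u by simp
  thus ?thesis unfolding irad_def rad_def by simp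
qed

lemma rad_irad: "rad (irad x) = x"
proof -
  have u0: "0 \<le> x \<bullet> x" by simp
  have p: "0 < 1 + x \<bullet> x" using u0 by linarith
  have "1 - irad x \<bullet> irad x = 1 / (1 + x \<bullet> x)" using p by (simp add: irad_inner field_simps)
  hence "sqrt (1 - irad x \<bullet> irad x) = 1 / sqrt (1 + x \<bullet> x)" by (simp add: real_sqrt_divide)
  hence "(1 / sqrt (1 - irad x \<bullet> irad x)) * (1 / sqrt (1 + x \<bullet> x)) = 1" using p
    by simp
  thus ?thesis unfolding irad_def rad_def by simp
qed

lemma rad_image:
  assumes "0 \<le> r" "r < 1"
  shows "rad ` ball 0 r = ball 0 (r / sqrt (1 - r^2))"
proof (intro equalityI subsetI)
  have r2: "r^2 < 1" using assms by (simp add: abs_square_less_1)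
  fix x assume "x \<in> rad ` ball 0 r"
  then obtain y where y: "norm y < r" "x = rad y" by auto
  have yy: "y \<bullet> y < r^2" using y assms by (simp add: dot_square_norm power_strict_mono)
  have y1: "y \<bullet> y < 1" using yy r2 by linarith
  have "x \<bullet> x = (y \<bullet> y) / (1 - y \<bullet> y)" using y y1 rad_inner by simp
  also have "\<dots> < r^2 / (1 - r^2)"
  proof (rule frac_lt_crossI)
    show "y \<bullet> y * (1 - r^2) < r^2 * (1 - y \<bullet> y)" using yy by (simp add: algebra_simps)
  qed (use y1 r2 in auto)
  finally have "(norm x)^2 < (r / sqrt (1 - r^2))^2" using r2
    by (simp add: power2_norm_eq_inner power_divide)
  hence "norm x < r / sqrt (1 - r^2)" by (rule power2_less_imp_less) (use assms r2 in simp)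
  thus "x \<in> ball 0 (r / sqrt (1 - r^2))" by simp
next
  have r2: "r^2 < 1" using assms by (simp add: abs_square_less_1)
  fix x :: "real^2" assume "x \<in> ball 0 (r / sqrt (1 - r^2))"
  hence "norm x < r / sqrt (1 - r^2)" by simp
  hence "(norm x)^2 < (r / sqrt (1 - r^2))^2" by (rule power_strict_mono) auto
  hence xx: "x \<bullet> x < r^2 / (1 - r^2)" using r2 by (simp add: power2_norm_eq_inner power_divide)
  have x0: "0 \<le> x \<bullet> x" by simp
  have "irad x \<bullet> irad x < r^2"
  proof -
    have "x \<bullet> x * (1 - r^2) < r^2" using xx r2 by (simp add: less_divide_eq)
    hence "x \<bullet> x < r^2 * (1 + x \<bullet> x)" by (simp add: algebra_simps)
    moreover have p: "0 < 1 + x \<bullet> x" using x0 by linarith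
    ultimately show ?thesis by (simp add: irad_inner pos_divide_less_eq mult.commute)
  qed
  hence "(norm (irad x))^2 < r^2" by (simp add: power2_norm_eq_inner)
  hence "norm (irad x) < r" by (rule power2_less_imp_less) (use assms in simp)
  thus "x \<in> rad ` ball 0 r" using rad_irad[of x] by (metis image_eqI mem_ball_0)
qed


lemma wt_ball:
  assumes r: "0 \<le> r" "r < 1"
  shows "(wt has_integral (pi * r^2 / (1 - r^2))) (ball 0 r)"
proof -
  have r2: "r^2 < 1" using r by (simp add: abs_square_less_1)
  define \<rho> where "\<rho> = r / sqrt (1 - r^2)"
  have \<rho>0: "0 \<le> \<rho>" using r r2 \<rho>_def by simp
  have \<rho>2: "\<rho>^2 = r^2 / (1 - r^2)" using r2 by (simp add: \<rho>_def power_divide)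
  have one: "((\<lambda>x. 1::real) has_integral (pi * r^2 / (1 - r^2))) (ball (0::real^2) \<rho>)"
  proof -
    have "((\<lambda>x. 1::real) has_integral (Henstock_Kurzweil_Integration.content (ball (0::real^2) \<rho>))) (ball (0::real^2) \<rho>)"
      by (rule has_integral_measure_lborel) (auto simp: emeasure_lborel_ball_finite[unfolded infinity_ennreal_def])
    moreover have "Henstock_Kurzweil_Integration.content (ball (0::real^2) \<rho>) = pi * r^2 / (1 - r^2)"
      using content_ball[OF \<rho>0, of "0::real^2"] \<rho>2 by (simp add: unit_ball_vol_2)
    ultimately show ?thesis by simp
  qed
  have S: "ball (0::real^2) r \<in> sets lebesgue" by (rule fmeasurableD[OF lmeasurable_ball])
  have der: "\<And>y. y \<in> ball 0 r \<Longrightarrow> (rad has_derivative (\<lambda>v. (1 / sqrt (1 - y \<bullet> y)) *\<^sub>R v + ((y \<bullet> v) / (sqrt (1 - y \<bullet> y))^3) *\<^sub>R y)) (at y within ball 0 r)"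
  proof -
    fix y :: "real^2" assume "y \<in> ball 0 r"
    hence "norm y < 1" using r by simp
    thus "?thesis y" by (rule has_derivative_at_withinI[OF rad_der])
  qed
  have inj: "inj_on rad (ball 0 r)"
  proof (rule inj_on_inverseI)
    fix y :: "real^2" assume "y \<in> ball 0 r"
    hence "norm y < 1" using r by simp
    thus "irad (rad y) = y" by (rule irad_rad)
  qed
  have "(wt has_integral (pi * r^2 / (1 - r^2))) (ball 0 r) \<longleftrightarrow> ((\<lambda>x. 1::real) has_integral (pi * r^2 / (1 - r^2))) (rad ` ball 0 r)"
    by (rule cv[OF S der inj]) (use r rad_det wt_nonneg in auto)
  thus ?thesis using one rad_image[OF r] \<rho>_def by simp
qed


definition G :: "complex \<Rightarrow> real^2 \<Rightarrow> real^2" where "G a x = T (mob a (Ti x))"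

lemma mob_deriv:
  assumes "1 - cnj a * u \<noteq> 0"
  shows "(mob a has_field_derivative (cnj a * a - 1) / ((1 - cnj a * u) * (1 - cnj a * u))) (at u)"
proof -
  have n: "((\<lambda>u. a - u) has_field_derivative (0 - 1)) (at u)"
    by (rule DERIV_diff[OF DERIV_const DERIV_ident])
  have d: "((\<lambda>u. 1 - cnj a * u) has_field_derivative (0 - cnj a * 1)) (at u)"
    by (rule DERIV_diff[OF DERIV_const DERIV_cmult[OF DERIV_ident]])
  have D: "((\<lambda>u. (a - u) / (1 - cnj a * u)) has_field_derivative
      ((0 - 1) * (1 - cnj a * u) - (a - u) * (0 - cnj a * 1)) / ((1 - cnj a * u) * (1 - cnj a * u))) (at u)"
    by (rule DERIV_divide[OF n d assms])
  have E: "(0 - 1) * (1 - cnj a * u) - (a - u) * (0 - cnj a * 1) = cnj a * a - 1"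
    by (simp add: algebra_simps)
  show ?thesis unfolding mob_def[abs_def] using D unfolding E .
qed

lemma G_der:
  assumes "1 - cnj a * Ti x \<noteq> 0"
  shows "(G a has_derivative (\<lambda>v. T (((cnj a * a - 1) / ((1 - cnj a * Ti x) * (1 - cnj a * Ti x))) * Ti v))) (at x)"
proof -
  define d where "d = (cnj a * a - 1) / ((1 - cnj a * Ti x) * (1 - cnj a * Ti x))"
  have m: "(mob a has_derivative (\<lambda>h. d * h)) (at (Ti x))"
    using mob_deriv[OF assms] unfolding has_field_derivative_def d_def .
  have ti: "(Ti has_derivative Ti) (at x)" by (rule bounded_linear_imp_has_derivative[OF bl_Ti])
  have t: "(T has_derivative T) (at (mob a (Ti x)))" by (rule bounded_linear_imp_has_derivative[OF bl_T])
  have c1: "((\<lambda>x. mob a (Ti x)) has_derivative (\<lambda>v. d * Ti v)) (at x)"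
    using has_derivative_compose[OF ti m] .
  have "((\<lambda>x. T (mob a (Ti x))) has_derivative (\<lambda>v. T (d * Ti v))) (at x)"
    using has_derivative_compose[OF c1 t] .
  thus ?thesis unfolding G_def[abs_def] d_def .
qed

lemma det_mult: "\<bar>det (matrix (\<lambda>v. T (d * Ti v)))\<bar> = (cmod d)^2"
proof -
  have "det (matrix (\<lambda>v. T (d * Ti v))) = (Re d)^2 + (Im d)^2"
    by (simp add: det_2 matrix_def T_def Ti_def axis_def power2_eq_square)
  thus ?thesis by (simp add: cmod_power2)
qed


lemma G_jac:
  assumes a: "cmod a < 1" and x: "norm x < 1"
  shows "\<bar>det (matrix (\<lambda>v. T (((cnj a * a - 1) / ((1 - cnj a * Ti x) * (1 - cnj a * Ti x))) * Ti v)))\<bar> * wt (G a x) = wt x"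
proof -
  define u where "u = Ti x"
  have u: "cmod u < 1" using x u_def norm_Ti by simp
  define A where "A = 1 - (cmod a)^2"
  define U where "U = 1 - (cmod u)^2"
  define E where "E = cmod (1 - cnj a * u)"
  have A0: "A > 0" using a A_def by (simp add: abs_square_less_1)
  have U0: "U > 0" using u U_def by (simp add: abs_square_less_1)
  have E0: "E > 0" using denom_nz[OF a u] E_def by simp
  have ca: "cmod (cnj a * a - 1) = A"
  proof -
    have "cnj a * a - 1 = complex_of_real (- A)"
      unfolding A_def using complex_norm_square[of a] by (simp add: mult.commute)
    thus ?thesis using A0 by simp
  qed
  have dd: "(cmod ((cnj a * a - 1) / ((1 - cnj a * u) * (1 - cnj a * u))))^2 = A^2 / E^4"
    by (simp add: norm_divide norm_mult ca E_def[symmetric] power_divide power4_eq_xxxx power2_eq_square)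
  have m: "1 - (cmod (mob a u))^2 = A * U / E^2"
    using mob_sq[OF a u] unfolding A_def U_def E_def .
  have wG: "wt (G a x) = 1 / (A * U / E^2)^2"
    unfolding wt_def G_def norm_T u_def[symmetric] m ..
  have wx: "wt x = 1 / U^2" unfolding wt_def U_def u_def norm_Ti ..
  show ?thesis unfolding det_mult u_def[symmetric] dd wG wx
    using A0 U0 E0 by (simp add: field_simps power4_eq_xxxx power2_eq_square)
qed

lemma wt_disk:
  assumes a: "cmod a < 1" and r: "0 \<le> r" "r < 1"
  shows "(wt has_integral (pi * r^2 / (1 - r^2))) (T ` ph_disk a r)"
proof -
  have S: "ball (0::real^2) r \<in> sets lebesgue" by (rule fmeasurableD[OF lmeasurable_ball])
  have nz: "1 - cnj a * Ti x \<noteq> 0" if "x \<in> ball 0 r" for x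
    using that r denom_nz[OF a, of "Ti x"] by (simp add: norm_Ti)
  have der: "\<And>x. x \<in> ball 0 r \<Longrightarrow> (G a has_derivative (\<lambda>v. T (((cnj a * a - 1) / ((1 - cnj a * Ti x) * (1 - cnj a * Ti x))) * Ti v))) (at x within ball 0 r)"
    by (rule has_derivative_at_withinI[OF G_der[OF nz]])
  have GG: "G a (G a x) = x" if "norm x < 1" for x
  proof -
    have "cmod (Ti x) < 1" using that by (simp add: norm_Ti)
    thus ?thesis unfolding G_def by (simp add: mob_mob[OF a])
  qed
  have inj: "inj_on (G a) (ball 0 r)"
  proof (rule inj_on_inverseI)
    fix y :: "real^2" assume "y \<in> ball 0 r"
    hence "norm y < 1" using r by simp
    thus "G a (G a y) = y" by (rule GG)
  qed
  have img: "G a ` ball 0 r = T ` ph_disk a r"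
  proof -
    have "G a ` ball 0 r = T ` (mob a ` (Ti ` ball 0 r))" unfolding G_def by (simp add: image_image)
    also have "\<dots> = T ` ph_disk a r" unfolding Ti_ball mob_image[OF a] using r by (simp add: mob_image[OF a])
    finally show ?thesis .
  qed
  have J: "\<And>x. x \<in> ball 0 r \<Longrightarrow> \<bar>det (matrix (\<lambda>v. T (((cnj a * a - 1) / ((1 - cnj a * Ti x) * (1 - cnj a * Ti x))) * Ti v)))\<bar> * wt (G a x) = wt x"
  proof -
    fix x :: "real^2" assume "x \<in> ball 0 r"
    hence "norm x < 1" using r by simp
    thus "?thesis x" by (rule G_jac[OF a])
  qed
  have "(wt has_integral (pi * r^2 / (1 - r^2))) (ball 0 r) \<longleftrightarrow> (wt has_integral (pi * r^2 / (1 - r^2))) (G a ` ball 0 r)"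
    by (rule cv[OF S der inj J]) (simp_all add: wt_nonneg)
  thus ?thesis using wt_ball[OF r] img by simp
qed

definition nu :: "(real^2) set \<Rightarrow> ennreal" where
  "nu A = (\<integral>\<^sup>+x. ennreal (wt x) * indicator A x \<partial>lborel)"

lemma nu_disk:
  assumes "cmod a < 1" "0 \<le> r" "r < 1"
  shows "nu (T ` ph_disk a r) = ennreal (pi * r^2 / (1 - r^2))"
  unfolding nu_def by (rule nn_integral_has_integral_lebesgue'[OF wt_nonneg wt_disk[OF assms]])

lemma mob_cont: "cmod a < 1 \<Longrightarrow> continuous_on (ball 0 1) (mob a)"
proof (rule continuous_at_imp_continuous_on, rule ballI)
  fix u assume "cmod a < 1" "u \<in> ball (0::complex) 1"
  hence "1 - cnj a * u \<noteq> 0" using denom_nz by simp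
  thus "isCont (mob a) u" by (rule DERIV_isCont[OF mob_deriv])
qed

lemma open_disk:
  assumes "cmod a < 1" shows "open (ph_disk a r)"
proof -
  have "ph_disk a r = ball 0 1 \<inter> mob a -` ball 0 r"
    by (auto simp: ph_disk_def unit_disk_def ph_mob)
  moreover have "open (mob a -` ball 0 r \<inter> ball 0 1)"
    using mob_cont[OF assms] continuous_on_open_vimage[of "ball 0 1" "mob a"] by simp
  ultimately show ?thesis by (simp add: Int_commute)
qed

lemma borel_Tdisk:
  assumes "cmod a < 1" shows "T ` ph_disk a r \<in> sets borel"
proof -
  have "open (Ti -` ph_disk a r)"
    by (rule open_vimage[OF open_disk[OF assms] linear_continuous_on[OF bl_Ti]])
  thus ?thesis unfolding T_image by simp
qed

lemma wt_meas: "(\<lambda>x. ennreal (wt x) * indicator A x) \<in> borel_measurable lborel"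
  if "A \<in> sets borel" using that unfolding wt_def by measurable

lemma nu_mono: "A \<subseteq> B \<Longrightarrow> nu A \<le> nu B"
  unfolding nu_def by (rule nn_integral_mono) (auto simp: indicator_def)

lemma nu_subadd:
  assumes "finite I" "\<And>i. i \<in> I \<Longrightarrow> A i \<in> sets borel"
  shows "nu (\<Union>i\<in>I. A i) \<le> (\<Sum>i\<in>I. nu (A i))"
proof -
  have "nu (\<Union>i\<in>I. A i) \<le> (\<integral>\<^sup>+x. (\<Sum>i\<in>I. ennreal (wt x) * indicator (A i) x) \<partial>lborel)"
    unfolding nu_def
  proof (rule nn_integral_mono)
    fix x
    show "ennreal (wt x) * indicator (\<Union>i\<in>I. A i) x \<le> (\<Sum>i\<in>I. ennreal (wt x) * indicator (A i) x)"
    proof (cases "x \<in> (\<Union>i\<in>I. A i)")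
      case True
      then obtain j where j: "j \<in> I" "x \<in> A j" by auto
      have "ennreal (wt x) * indicator (\<Union>i\<in>I. A i) x = ennreal (wt x) * indicator (A j) x"
        using True j by simp
      also have "\<dots> \<le> (\<Sum>i\<in>I. ennreal (wt x) * indicator (A i) x)"
        by (rule member_le_sum) (use j assms in auto)
      finally show ?thesis .
    qed simp
  qed
  also have "\<dots> = (\<Sum>i\<in>I. nu (A i))"
    unfolding nu_def by (rule nn_integral_sum) (use assms wt_meas in auto)
  finally show ?thesis .
qed

lemma nu_disj:
  assumes "finite I" "\<And>i. i \<in> I \<Longrightarrow> A i \<in> sets borel" "disjoint_family_on A I"
  shows "nu (\<Union>i\<in>I. A i) = (\<Sum>i\<in>I. nu (A i))"
proof -
  have "nu (\<Union>i\<in>I. A i) = (\<integral>\<^sup>+x. (\<Sum>i\<in>I. ennreal (wt x) * indicator (A i) x) \<partial>lborel)"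
    unfolding nu_def
  proof (rule nn_integral_cong)
    fix x
    have "indicator (\<Union>i\<in>I. A i) x = (\<Sum>i\<in>I. indicator (A i) x :: ennreal)"
      by (rule indicator_UN_disjoint[OF assms(1,3)])
    thus "ennreal (wt x) * indicator (\<Union>i\<in>I. A i) x = (\<Sum>i\<in>I. ennreal (wt x) * indicator (A i) x)"
      by (simp add: sum_distrib_left)
  qed
  also have "\<dots> = (\<Sum>i\<in>I. nu (A i))"
    unfolding nu_def by (rule nn_integral_sum) (use assms wt_meas in auto)
  finally show ?thesis .
qed


lemma alg_low:
  fixes R L k :: real
  assumes R: "0 < R" "R < 1" and L: "0 < L" "L < 1"
    and h: "pi * R^2 / (1 - R^2) \<le> k * (pi * L^2 / (1 - L^2))"
  shows "R^2 / (1 - R^2) * ((1 - L^2) / L^2) \<le> k"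
proof -
  define X where "X = R^2 / (1 - R^2)"
  define Y where "Y = L^2 / (1 - L^2)"
  have L2: "L^2 < 1" using L by (simp add: abs_square_less_1)
  have Y0: "Y > 0" using L L2 Y_def by simp
  have "pi * X \<le> pi * (k * Y)" using h unfolding X_def Y_def by (simp add: mult.commute mult.left_commute)
  hence XY: "X \<le> k * Y" by simp
  have "X * ((1 - L^2) / L^2) = X / Y" unfolding Y_def by simp
  also have "\<dots> \<le> k" using XY Y0 by (simp add: pos_divide_le_eq)
  finally show ?thesis unfolding X_def .
qed

lemma alg_S:
  fixes R t :: real
  assumes R: "0 \<le> R" "R < 1" and t: "0 \<le> t" "t < 1"
  shows "((R + t) / (1 + R * t))^2 / (1 - ((R + t) / (1 + R * t))^2) = (R + t)^2 / ((1 - R^2) * (1 - t^2))"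
proof -
  have P: "1 + R * t > 0" using R t by (simp add: add_pos_nonneg)
  have A: "1 - R^2 > 0" using R by (simp add: abs_square_less_1)
  have B: "1 - t^2 > 0" using t by (simp add: abs_square_less_1)
  define Pv where "Pv = 1 + R * t"
  define Qv where "Qv = R + t"
  have Pv: "Pv \<noteq> 0" using P Pv_def by simp
  have d: "Pv^2 - Qv^2 = (1 - R^2) * (1 - t^2)" unfolding Pv_def Qv_def by (simp add: algebra_simps power2_eq_square)
  have e: "1 - (Qv / Pv)^2 = (1 - R^2) * (1 - t^2) / Pv^2"
    unfolding d[symmetric] using Pv by (simp add: field_simps power_divide)
  have "(Qv / Pv)^2 / (1 - (Qv / Pv)^2) = Qv^2 / ((1 - R^2) * (1 - t^2))"
    unfolding e using Pv A B by (simp add: power_divide)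
  thus ?thesis unfolding Pv_def Qv_def .
qed

lemma alg_up:
  fixes R L k :: real
  assumes R: "0 < R" "R < 1" and L: "0 < L" "L < 1" and k: "0 \<le> k"
    and h: "k * (pi * (L/2)^2 / (1 - (L/2)^2)) \<le> pi * ((R + L/2) / (1 + R * (L/2)))^2 / (1 - ((R + L/2) / (1 + R * (L/2)))^2)"
  shows "k \<le> (2 * R + L)^2 / (1 - R^2) * (1 / L^2)"
proof -
  define t where "t = L / 2"
  have t: "0 \<le> t" "t < 1" using L t_def by auto
  have A: "1 - R^2 > 0" using R by (simp add: abs_square_less_1)
  have B: "1 - t^2 > 0" using t by (simp add: abs_square_less_1)
  have h1: "k * (pi * t^2 / (1 - t^2)) \<le> pi * ((R + t) / (1 + R * t))^2 / (1 - ((R + t) / (1 + R * t))^2)"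
    using h unfolding t_def .
  have eq1: "k * (pi * t^2 / (1 - t^2)) = pi * (k * (t^2 / (1 - t^2)))" by simp
  have eq2: "pi * ((R + t) / (1 + R * t))^2 / (1 - ((R + t) / (1 + R * t))^2)
      = pi * (((R + t) / (1 + R * t))^2 / (1 - ((R + t) / (1 + R * t))^2))" by (rule times_divide_eq_right[symmetric])
  have "pi * (k * (t^2 / (1 - t^2))) \<le> pi * ((R + t)^2 / ((1 - R^2) * (1 - t^2)))"
    using h1 unfolding eq1 eq2 alg_S[of R t, OF less_imp_le[OF R(1)] R(2) t] .
  hence "k * (t^2 / (1 - t^2)) \<le> (R + t)^2 / ((1 - R^2) * (1 - t^2))"
    by (rule mult_left_le_imp_le) (rule pi_gt_zero)
  hence H: "k * t^2 / (1 - t^2) \<le> ((R + t)^2 / (1 - R^2)) / (1 - t^2)"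
    by (simp only: times_divide_eq_right divide_divide_eq_left)
  have kt: "k * t^2 \<le> (R + t)^2 / (1 - R^2)" using H B by (subst (asm) divide_le_cancel) simp
  have e1: "k * L^2 = 4 * (k * t^2)" unfolding t_def by (simp add: power2_eq_square)
  have e2: "(2 * R + L)^2 / (1 - R^2) = 4 * ((R + t)^2 / (1 - R^2))"
    unfolding t_def by (simp add: power2_eq_square algebra_simps)
  have "k * L^2 \<le> (2 * R + L)^2 / (1 - R^2)" unfolding e1 e2 using kt by simp
  moreover have L2: "0 < L^2" using L by simp
  ultimately have "k \<le> (2 * R + L)^2 / (1 - R^2) / L^2" by (simp only: pos_le_divide_eq)
  thus ?thesis by simp
qed


lemma sum_const_ennreal:
  assumes "0 \<le> y" shows "(\<Sum>c\<in>C. ennreal y) = ennreal (real (card C) * y)"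
  using assms by (simp add: ennreal_mult ennreal_of_nat_eq_real_of_nat)

theorem lemma4p2:
  fixes z :: complex and R L :: real and C :: "complex set" and k :: nat
  assumes "z \<in> unit_disk"
    and "0 < R" and "R < 1"
    and "0 < L" and "L < 1"
    and "L_chain L (ph_disk z R) C"
    and "finite C" and "card C = k"
  shows "R\<^sup>2 / (1 - R\<^sup>2) * ((1 - L\<^sup>2) / L\<^sup>2) \<le> real k \<and>
         real k \<le> (2 * R + L)\<^sup>2 / (1 - R\<^sup>2) * (1 / L\<^sup>2)"
proof -
  note R = assms(2,3) and L = assms(4,5) and fin = assms(7) and card = assms(8)
  have z: "cmod z < 1" using assms(1) by (simp add: unit_disk_def)
  have sep: "separated L (ph_disk z R) C" and maxi: "\<And>C'. separated L (ph_disk z R) C' \<Longrightarrow> C \<subseteq> C' \<Longrightarrow> C' = C"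
    using assms(6) unfolding L_chain_def by auto
  have Csub: "C \<subseteq> ph_disk z R" and Csep: "\<And>a b. a \<in> C \<Longrightarrow> b \<in> C \<Longrightarrow> a \<noteq> b \<Longrightarrow> L \<le> pseudo_hyp a b"
    using sep unfolding separated_def by auto
  have Cd: "\<And>c. c \<in> C \<Longrightarrow> cmod c < 1 \<and> pseudo_hyp c z < R"
    using Csub by (auto simp: ph_disk_def unit_disk_def)
  have L2: "L^2 < 1" using L by (simp add: abs_square_less_1)
  have R2: "R^2 < 1" using R by (simp add: abs_square_less_1)
  have cover: "ph_disk z R \<subseteq> (\<Union>c\<in>C. ph_disk c L)"
  proof
    fix w assume w: "w \<in> ph_disk z R"
    hence w1: "cmod w < 1" by (simp add: ph_disk_def unit_disk_def)
    show "w \<in> (\<Union>c\<in>C. ph_disk c L)"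
    proof (cases "\<exists>c\<in>C. pseudo_hyp w c < L")
      case True
      then obtain c where "c \<in> C" "pseudo_hyp w c < L" by auto
      thus ?thesis using w1 by (auto simp: ph_disk_def unit_disk_def)
    next
      case False
      hence far: "\<And>c. c \<in> C \<Longrightarrow> L \<le> pseudo_hyp w c" by (simp add: not_less)
      have "w \<notin> C"
      proof
        assume "w \<in> C"
        hence "L \<le> pseudo_hyp w w" using far by blast
        thus False using L by (simp add: pseudo_hyp_def)
      qed
      have "separated L (ph_disk z R) (insert w C)"
        unfolding separated_def
      proof (intro conjI ballI impI)
        show "insert w C \<subseteq> ph_disk z R" using w Csub by auto
      next
        fix a b assume ab: "a \<in> insert w C" "b \<in> insert w C" "a \<noteq> b"
        show "L \<le> pseudo_hyp a b"
        proof (cases "a = w")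
          case True
          hence "b \<in> C" using ab by auto
          thus ?thesis using far True by simp
        next
          case False
          hence a: "a \<in> C" using ab by auto
          show ?thesis
          proof (cases "b = w")
            case True
            thus ?thesis using far[OF a] ph_sym[of a w] by simp
          next
            case False
            thus ?thesis using a ab Csep by auto
          qed
        qed
      qed
      hence "insert w C = C" using maxi by blast
      thus ?thesis using \<open>w \<notin> C\<close> by blast
    qed
  qed
  have "ennreal (pi * R^2 / (1 - R^2)) = nu (T ` ph_disk z R)"
    using nu_disk[OF z] R by simp
  also have "\<dots> \<le> nu (\<Union>c\<in>C. T ` ph_disk c L)"
    by (rule nu_mono) (use cover in blast)
  also have "\<dots> \<le> (\<Sum>c\<in>C. nu (T ` ph_disk c L))"
    by (rule nu_subadd[OF fin]) (use Cd borel_Tdisk in blast)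
  also have "\<dots> = (\<Sum>c\<in>C. ennreal (pi * L^2 / (1 - L^2)))"
    by (rule sum.cong) (use Cd nu_disk L in auto)
  also have "\<dots> = ennreal (real k * (pi * L^2 / (1 - L^2)))"
    using L2 card by (subst sum_const_ennreal) auto
  finally have lowE: "ennreal (pi * R^2 / (1 - R^2)) \<le> ennreal (real k * (pi * L^2 / (1 - L^2)))" .
  have low: "pi * R^2 / (1 - R^2) \<le> real k * (pi * L^2 / (1 - L^2))"
    using lowE L2 by (subst (asm) ennreal_le_iff) auto
  define t where "t = L / 2"
  have t: "0 < t" "t < 1" using L t_def by auto
  define S where "S = (R + t) / (1 + R * t)"
  have S: "0 \<le> S" "S < 1"
  proof -
    have p: "1 + R * t > 0" using R t by (simp add: add_pos_pos)
    have "R + t < 1 + R * t"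
    proof -
      have "0 < (1 - R) * (1 - t)" using R t by simp
      thus ?thesis by (simp add: algebra_simps)
    qed
    thus "S < 1" using p S_def by simp
    show "0 \<le> S" using R t p S_def by simp
  qed
  have disj: "disjoint_family_on (\<lambda>c. T ` ph_disk c t) C"
    unfolding disjoint_family_on_def
  proof (intro ballI impI)
    fix a b assume ab: "a \<in> C" "b \<in> C" "a \<noteq> b"
    show "T ` ph_disk a t \<inter> T ` ph_disk b t = {}"
    proof (rule ccontr)
      assume "T ` ph_disk a t \<inter> T ` ph_disk b t \<noteq> {}"
      then obtain w where "w \<in> ph_disk a t" "w \<in> ph_disk b t" by (auto simp: T_image)
      hence w: "cmod w < 1" "pseudo_hyp w a < t" "pseudo_hyp w b < t" by (auto simp: ph_disk_def unit_disk_def)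
      have "pseudo_hyp a b \<le> pseudo_hyp a w + pseudo_hyp w b"
        using Cd ab w by (intro ph_tri) auto
      also have "\<dots> < L" using w ph_sym[of a w] t_def by simp
      finally show False using Csep ab by fastforce
    qed
  qed
  have inside: "(\<Union>c\<in>C. T ` ph_disk c t) \<subseteq> T ` ph_disk z S"
  proof -
    have "ph_disk c t \<subseteq> ph_disk z S" if c: "c \<in> C" for c
    proof
      fix w assume "w \<in> ph_disk c t"
      hence w: "cmod w < 1" "pseudo_hyp w c < t" by (auto simp: ph_disk_def unit_disk_def)
      have "pseudo_hyp w z < S" unfolding S_def
        using ph_contain[OF z _ w(1) _ w(2) t R(2)] Cd[OF c] by blast
      thus "w \<in> ph_disk z S" using w by (simp add: ph_disk_def unit_disk_def)
    qed
    thus ?thesis by blast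
  qed
  have "ennreal (real k * (pi * t^2 / (1 - t^2))) = (\<Sum>c\<in>C. ennreal (pi * t^2 / (1 - t^2)))"
  proof -
    have "t^2 < 1" using t by (simp add: abs_square_less_1)
    thus ?thesis using card by (subst sum_const_ennreal) auto
  qed
  also have "\<dots> = (\<Sum>c\<in>C. nu (T ` ph_disk c t))"
    by (rule sum.cong) (use Cd nu_disk t in auto)
  also have "\<dots> = nu (\<Union>c\<in>C. T ` ph_disk c t)"
    by (rule nu_disj[symmetric, OF fin _ disj]) (use Cd borel_Tdisk in blast)
  also have "\<dots> \<le> nu (T ` ph_disk z S)" by (rule nu_mono[OF inside])
  also have "\<dots> = ennreal (pi * S^2 / (1 - S^2))" using nu_disk[OF z S] .
  finally have upE: "ennreal (real k * (pi * t^2 / (1 - t^2))) \<le> ennreal (pi * S^2 / (1 - S^2))" .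
  have S2: "S^2 < 1" using S by (simp add: abs_square_less_1)
  have up: "real k * (pi * t^2 / (1 - t^2)) \<le> pi * S^2 / (1 - S^2)"
    using upE S2 by (subst (asm) ennreal_le_iff) auto
  show ?thesis
  proof
    show "R\<^sup>2 / (1 - R\<^sup>2) * ((1 - L\<^sup>2) / L\<^sup>2) \<le> real k" by (rule alg_low[OF R L low])
    show "real k \<le> (2 * R + L)\<^sup>2 / (1 - R\<^sup>2) * (1 / L\<^sup>2)"
      by (rule alg_up[OF R L _ up[unfolded t_def S_def]]) simp
  qed
qed

end
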